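(* Let $\mathcal{A}=\{\alpha_1<\dots<\alpha_m\}\subset(0,1)$, $d_{\mathcal{A}}=\min_{\alpha\in\mathcal{A}}\min(\alpha,1-\alpha)$. Suppose the base forecasts are point forecasts, $b_t=[k_t,\dots,k_t]$ for some $k_t\in\mathbb{R}$, and $|y_t-k_t|\le R$ for all $t$. Then for every $\alpha\in\mathcal{A}$ and $T\ge1$, the MultiQT iterates (learning rate $\eta>0$, initial hidden offset $\tilde\theta_1\in\mathcal{K}$) satisfy $$\Bigg|\frac1T\sum_{t=1}^T\mathrm{cov}_t^{\alpha}-\alpha\Bigg|\le\frac{2\|\tilde\theta_1\|_2}{\eta T}+\frac{|\mathcal{A}|^{1/2}}{T}+\frac{|\mathcal{A}|^{3/2}}{2d_{\mathcal{A}}T}+\frac{R|\mathcal{A}|^{3/2}}{d_{\mathcal{A}}\eta T}+\frac{|\mathcal{A}|^{3/2}}{T\sqrt3}.$$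
   Context: $\mathcal{K}=\{x\in\mathbb{R}^m:x_1\le\dots\le x_m\}$; $\Pi_C$ Euclidean projection; $C-v=\{x-v:x\in C\}$. MultiQT: for $t=1,2,\dots$, $\theta_t=\Pi_{\mathcal{K}-b_t}(\tilde\theta_t)$, forecast $q_t=b_t+\theta_t$, $\mathrm{cov}_t^{\alpha}=\mathbb{1}\{y_t\le q_t^{\alpha}\}$, and $\tilde\theta_{t+1}^{\alpha}=\tilde\theta_t^{\alpha}-\eta(\mathrm{cov}_t^{\alpha}-\alpha)$ for each $\alpha\in\mathcal{A}$. *)

theory Defs
  imports "HOL-Analysis.Analysis"
begin

text \<open>Vectors in R^m are modelled as (real,'m) vec where the index type 'm is a finite
linearly ordered type (isomorphic to {1..m}); |A| = CARD('m).\<close>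

definition monoK :: "((real,'m::{finite,linorder}) vec) set" where
  "monoK = {x. \<forall>i j. i \<le> j \<longrightarrow> x $ i \<le> x $ j}"

definition shift_set :: "((real,'m::finite) vec) set \<Rightarrow> (real,'m) vec \<Rightarrow> ((real,'m) vec) set" where
  "shift_set C v = (\<lambda>x. x - v) ` C"

definition proj :: "((real,'m::finite) vec) set \<Rightarrow> (real,'m) vec \<Rightarrow> (real,'m) vec" where
  "proj C x = closest_point C x"

text \<open>MultiQT hidden offsets; mqt_hidden ... t is theta-tilde_t for t \<ge> 1
  (the value at t = 0 is an unused dummy).\<close>
definition mqt_step :: "(real,'m::{finite,linorder}) vec \<Rightarrow> real \<Rightarrow> (real,'m) vec \<Rightarrow> real
    \<Rightarrow> (real,'m) vec \<Rightarrow> (real,'m) vec" where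
  "mqt_step alpha eta bt yt th =
     (let q = bt + proj (shift_set monoK bt) th
      in th - eta *\<^sub>R (\<chi> i. (if yt \<le> q $ i then 1 else 0) - alpha $ i))"

fun mqt_hidden :: "(real,'m::{finite,linorder}) vec \<Rightarrow> real \<Rightarrow> (nat \<Rightarrow> (real,'m) vec) \<Rightarrow> (nat \<Rightarrow> real)
    \<Rightarrow> (real,'m) vec \<Rightarrow> nat \<Rightarrow> (real,'m) vec" where
  "mqt_hidden alpha eta b y th1 0 = th1"
| "mqt_hidden alpha eta b y th1 (Suc 0) = th1"
| "mqt_hidden alpha eta b y th1 (Suc (Suc n)) =
     mqt_step alpha eta (b (Suc n)) (y (Suc n)) (mqt_hidden alpha eta b y th1 (Suc n))"

definition mqt_forecast :: "(real,'m::{finite,linorder}) vec \<Rightarrow> real \<Rightarrow> (nat \<Rightarrow> (real,'m) vec) \<Rightarrow> (nat \<Rightarrow> real)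
    \<Rightarrow> (real,'m) vec \<Rightarrow> nat \<Rightarrow> (real,'m) vec" where
  "mqt_forecast alpha eta b y th1 t =
     b t + proj (shift_set monoK (b t)) (mqt_hidden alpha eta b y th1 t)"

definition mqt_cov :: "(real,'m::{finite,linorder}) vec \<Rightarrow> real \<Rightarrow> (nat \<Rightarrow> (real,'m) vec) \<Rightarrow> (nat \<Rightarrow> real)
    \<Rightarrow> (real,'m) vec \<Rightarrow> nat \<Rightarrow> 'm \<Rightarrow> real" where
  "mqt_cov alpha eta b y th1 t i =
     (if y t \<le> mqt_forecast alpha eta b y th1 t $ i then 1 else 0)"

definition dA :: "(real,'m::{finite,linorder}) vec \<Rightarrow> real" where
  "dA alpha = Min ((\<lambda>i. min (alpha $ i) (1 - alpha $ i)) ` UNIV)"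

end

theory Submission
  imports Defs
begin

lemma monoK_iff: "x \<in> monoK \<longleftrightarrow> (\<forall>i j. i \<le> j \<longrightarrow> x$i \<le> x$j)"
  by (simp add: monoK_def)

lemma closed_monoK: "closed (monoK :: ((real,'m::{finite,linorder}) vec) set)"
proof -
  have "(monoK :: ((real,'m) vec) set) = (\<Inter>i. \<Inter>j. {x. i \<le> j \<longrightarrow> x$i \<le> x$j})"
    by (auto simp: monoK_def)
  moreover have "closed {x::(real,'m) vec. i \<le> j \<longrightarrow> x$i \<le> x$j}" for i j
    by (cases "i \<le> j") (auto intro!: closed_Collect_le continuous_intros)
  ultimately show ?thesis by (metis (no_types, lifting) closed_INT)
qed

lemma convex_monoK: "convex (monoK :: ((real,'m::{finite,linorder}) vec) set)"
  unfolding convex_def monoK_def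
  by (auto intro!: add_mono mult_left_mono)

lemma monoK_ne: "(monoK :: ((real,'m::{finite,linorder}) vec) set) \<noteq> {}"
proof -
  have "(0::(real,'m) vec) \<in> monoK" by (simp add: monoK_iff)
  then show ?thesis by auto
qed

lemma P_in: "closest_point monoK (H::(real,'m::{finite,linorder}) vec) \<in> monoK"
  by (rule closest_point_in_set[OF closed_monoK monoK_ne])

lemma VI: "x \<in> monoK \<Longrightarrow>
  inner (H - closest_point monoK H) (x - closest_point monoK (H::(real,'m::{finite,linorder}) vec)) \<le> 0"
  by (rule closest_point_dot[OF convex_monoK closed_monoK])

lemma shift_const: "shift_set monoK ((\<chi> j. c)::(real,'m::{finite,linorder}) vec) = monoK"
proof -
  have "x \<in> (\<lambda>x. x - (\<chi> j. c)) ` monoK" if "x \<in> monoK" for x :: "(real,'m) vec"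
  proof
    show "x = (x + (\<chi> j. c)) - (\<chi> j. c)" by simp
    show "x + (\<chi> j. c) \<in> monoK" using that by (simp add: monoK_iff)
  qed
  then show ?thesis unfolding shift_set_def by (auto simp: monoK_iff)
qed

lemma split_lemma:
  fixes P :: "(real,'m::{finite,linorder}) vec"
  assumes "P \<in> monoK" "P$i < z" "z \<le> P$j"
  obtains a b where "P$a < z" "z \<le> P$b" "\<And>k. P$k < z \<longleftrightarrow> k \<le> a" "\<And>k. P$k < z \<longleftrightarrow> k < b"
proof -
  define L where "L = {k. P$k < z}"
  define a where "a = Max L"
  define b where "b = Min (UNIV - L)"
  have "i \<in> L" "j \<notin> L" using assms by (auto simp: L_def)
  then have aL: "a \<in> L" unfolding a_def by (auto intro!: Max_in)
  have "b \<in> UNIV - L" unfolding b_def using \<open>j \<notin> L\<close> by (intro Min_in) auto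
  then have bL: "b \<notin> L" by simp
  have mono: "\<And>k l. k \<le> l \<Longrightarrow> P$k \<le> P$l" using assms(1) by (simp add: monoK_iff)
  have 1: "P$k < z \<longleftrightarrow> k \<le> a" for k
  proof
    assume "P$k < z" then show "k \<le> a" unfolding a_def by (auto simp: L_def)
  next
    assume "k \<le> a" then show "P$k < z" using mono[of k a] aL by (auto simp: L_def)
  qed
  have 2: "P$k < z \<longleftrightarrow> k < b" for k
  proof
    assume h: "P$k < z" show "k < b"
    proof (rule ccontr)
      assume "\<not> k < b" then have "b \<le> k" by simp
      then show False using mono[of b k] h bL by (auto simp: L_def)
    qed
  next
    assume h: "k < b" show "P$k < z"
    proof (rule ccontr)
      assume "\<not> P$k < z" then have "k \<in> UNIV - L" by (auto simp: L_def)
      then have "b \<le> k" unfolding b_def by (auto intro!: Min_le)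
      then show False using h by simp
    qed
  qed
  have "P$a < z" "z \<le> P$b" using aL bL by (auto simp: L_def)
  then show ?thesis using that[of a b] 1 2 by blast
qed


lemma sum_single:
  fixes f :: "'m::finite \<Rightarrow> real"
  assumes "\<And>i. i \<noteq> a \<Longrightarrow> f i = 0"
  shows "sum f UNIV = f a"
proof -
  have "sum f UNIV = sum (\<lambda>i. if i = a then f a else 0) UNIV"
    by (rule sum.cong) (use assms in auto)
  then show ?thesis by simp
qed

lemma bdry:
  fixes H :: "(real,'m::{finite,linorder}) vec"
  defines "P \<equiv> closest_point monoK H"
  assumes ab: "P$a < P$b" "\<And>k. k \<le> a \<longleftrightarrow> k < b"
  shows "H$a \<le> P$a" "P$b \<le> H$b"
proof -
  have Pm: "\<And>k l. k \<le> l \<Longrightarrow> P$k \<le> P$l" using P_in[of H] by (simp add: P_def monoK_iff)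
  define x where "x = (\<chi> k. if k = a then P$b else P$k)"
  have "x \<in> monoK" unfolding monoK_iff
  proof (intro allI impI)
    fix k l :: 'm assume kl: "k \<le> l"
    show "x$k \<le> x$l"
    proof (cases "k = a"; cases "l = a")
      assume "k = a" "l \<noteq> a"
      then have "b \<le> l" using ab(2)[of l] kl by auto
      then show ?thesis using Pm[of b l] \<open>k = a\<close> \<open>l \<noteq> a\<close> by (simp add: x_def)
    next
      assume "k \<noteq> a" "l = a"
      then show ?thesis using Pm[of k a] kl ab(1) by (simp add: x_def)
    qed (use Pm kl in \<open>auto simp: x_def\<close>)
  qed
  from VI[OF this, of H] have "inner (H - P) (x - P) \<le> 0" by (simp add: P_def)
  moreover have "inner (H - P) (x - P) = (H$a - P$a) * (P$b - P$a)"
    unfolding inner_vec_def by (subst sum_single[where a=a]) (auto simp: x_def)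
  ultimately show "H$a \<le> P$a" using ab(1) by (simp add: mult_le_0_iff)
  define x' where "x' = (\<chi> k. if k = b then P$a else P$k)"
  have "x' \<in> monoK" unfolding monoK_iff
  proof (intro allI impI)
    fix k l :: 'm assume kl: "k \<le> l"
    show "x'$k \<le> x'$l"
    proof (cases "k = b"; cases "l = b")
      assume "k \<noteq> b" "l = b"
      then have "k \<le> a" using ab(2)[of k] kl by auto
      then show ?thesis using Pm[of k a] \<open>k \<noteq> b\<close> \<open>l = b\<close> by (simp add: x'_def)
    next
      assume "k = b" "l \<noteq> b"
      then show ?thesis using Pm[of b l] kl ab(1) by (simp add: x'_def)
    qed (use Pm kl in \<open>auto simp: x'_def\<close>)
  qed
  from VI[OF this, of H] have "inner (H - P) (x' - P) \<le> 0" by (simp add: P_def)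
  moreover have "inner (H - P) (x' - P) = (H$b - P$b) * (P$a - P$b)"
    unfolding inner_vec_def by (subst sum_single[where a=b]) (auto simp: x'_def)
  ultimately show "P$b \<le> H$b" using ab(1) by (simp add: mult_le_0_iff)
qed

lemma inner_r_alpha:
  fixes H :: "(real,'m::{finite,linorder}) vec"
  assumes "alpha \<in> monoK"
  shows "inner (H - closest_point monoK H) alpha \<le> 0"
proof -
  have "closest_point monoK H + alpha \<in> monoK"
    using P_in[of H] assms by (auto simp: monoK_iff intro: add_mono)
  from VI[OF this, of H] show ?thesis by simp
qed

lemma inner_r_cov:
  fixes H :: "(real,'m::{finite,linorder}) vec"
  defines "P \<equiv> closest_point monoK H"
  shows "inner (H - P) (\<chi> i. if z \<le> P$i then 1 else 0) \<ge> 0"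
proof -
  let ?c = "(\<chi> i. if z \<le> P$i then 1 else 0) :: (real,'m) vec"
  have Pm: "\<And>k l. k \<le> l \<Longrightarrow> P$k \<le> P$l" using P_in[of H] by (simp add: P_def monoK_iff)
  have key: "inner (H - P) ?c \<ge> 0" if eps: "e > 0" "P - e *\<^sub>R ?c \<in> monoK" for e
  proof -
    from VI[OF eps(2), of H] have "inner (H - P) (- (e *\<^sub>R ?c)) \<le> 0" by (simp add: P_def)
    then have "e * inner (H - P) ?c \<ge> 0" by simp
    then show ?thesis using eps(1) by (simp add: zero_le_mult_iff)
  qed
  show ?thesis
  proof (cases "\<exists>j. z \<le> P$j")
    case False
    then have "?c = 0" by (auto simp: vec_eq_iff not_le)
    then show ?thesis by simp
  next
    case True
    then obtain j where j: "z \<le> P$j" by blast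
    show ?thesis
    proof (cases "\<exists>i. P$i < z")
      case False
      show ?thesis
      proof (rule key[of 1])
        show "P - 1 *\<^sub>R ?c \<in> monoK" using False Pm by (auto simp: monoK_iff not_less)
      qed simp
    next
      case True
      then obtain i where i: "P$i < z" by blast
      obtain a b where ab: "P$a < z" "z \<le> P$b" "\<And>k. P$k < z \<longleftrightarrow> k \<le> a" "\<And>k. P$k < z \<longleftrightarrow> k < b"
        using split_lemma[OF P_in[of H, folded P_def] i j] by blast
      show ?thesis
      proof (rule key[of "P$b - P$a"])
        show "P$b - P$a > 0" using ab(1,2) by linarith
        show "P - (P$b - P$a) *\<^sub>R ?c \<in> monoK" unfolding monoK_iff
        proof (intro allI impI)
          fix k l :: 'm assume kl: "k \<le> l"
          consider "z \<le> P$k" "z \<le> P$l" | "P$k < z" "P$l < z" | "P$k < z" "z \<le> P$l" | "z \<le> P$k" "P$l < z"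
            by linarith
          then show "(P - (P$b - P$a) *\<^sub>R ?c)$k \<le> (P - (P$b - P$a) *\<^sub>R ?c)$l"
          proof cases
            case 3
            then have "k \<le> a" "b \<le> l" using ab(3)[of k] ab(4)[of l] by auto
            then show ?thesis using 3 Pm[of k a] Pm[of b l] by simp
          next
            case 4 then show ?thesis using Pm[OF kl] by simp
          qed (use Pm[OF kl] in auto)
        qed
      qed
    qed
  qed
qed


definition rkv :: "(real,'m::{finite,linorder}) vec" where
  "rkv = (\<chi> i. real (card {k. k < i}))"

lemma rkv_mono: "rkv \<in> monoK"
  unfolding monoK_iff rkv_def by (auto intro!: card_mono)

lemma gap:
  fixes H :: "(real,'m::{finite,linorder}) vec"
  defines "P \<equiv> closest_point monoK H"
  assumes Y: "H + eta *\<^sub>R rkv \<in> monoK" and i: "P$i < z" and j: "z \<le> P$j"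
  shows "(H + eta *\<^sub>R rkv)$j - (H + eta *\<^sub>R rkv)$i \<ge> eta"
proof -
  obtain a b where ab: "P$a < z" "z \<le> P$b" "\<And>k. P$k < z \<longleftrightarrow> k \<le> a" "\<And>k. P$k < z \<longleftrightarrow> k < b"
    using split_lemma[OF P_in[of H, folded P_def] i j] by blast
  have kab: "\<And>k. k \<le> a \<longleftrightarrow> k < b" using ab(3,4) by blast
  have "P$a < P$b" using ab(1,2) by linarith
  from bdry[of H a b, folded P_def, OF this kab] have Ha: "H$a \<le> P$a" and Hb: "P$b \<le> H$b" by auto
  have "{k. k < b} = insert a {k. k < a}" using kab by (auto simp: order.order_iff_strict)
  then have "card {k. k < b} = Suc (card {k. k < a})" by simp
  then have rk: "rkv$b = rkv$a + 1" by (simp add: rkv_def)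
  have "i \<le> a" "b \<le> j" using ab(3)[of i] ab(4)[of j] i j by auto
  then have "(H + eta *\<^sub>R rkv)$i \<le> (H + eta *\<^sub>R rkv)$a" "(H + eta *\<^sub>R rkv)$b \<le> (H + eta *\<^sub>R rkv)$j"
    using Y by (auto simp: monoK_iff)
  moreover have "(H + eta *\<^sub>R rkv)$b - (H + eta *\<^sub>R rkv)$a \<ge> eta"
    using Ha Hb \<open>P$a < P$b\<close> rk by (simp add: algebra_simps)
  ultimately show ?thesis by linarith
qed

lemma inv_step:
  fixes H :: "(real,'m::{finite,linorder}) vec"
  defines "P \<equiv> closest_point monoK H"
  assumes Y: "H + eta *\<^sub>R rkv \<in> monoK" and eta: "eta > 0"
    and am: "\<And>i j. i < j \<Longrightarrow> alpha $ i < alpha $ j"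
  shows "(H - eta *\<^sub>R ((\<chi> i. if z \<le> P$i then 1 else 0) - alpha)) + eta *\<^sub>R rkv \<in> monoK"
proof -
  let ?Y = "H + eta *\<^sub>R rkv"
  have Pm: "\<And>k l. k \<le> l \<Longrightarrow> P$k \<le> P$l" using P_in[of H] by (simp add: P_def monoK_iff)
  have Ym: "\<And>k l. k \<le> l \<Longrightarrow> ?Y$k \<le> ?Y$l" using Y by (simp add: monoK_iff)
  show ?thesis unfolding monoK_iff
  proof (intro allI impI)
    fix i j :: 'm assume ij: "i \<le> j"
    show "((H - eta *\<^sub>R ((\<chi> i. if z \<le> P$i then 1 else 0) - alpha)) + eta *\<^sub>R rkv)$i
        \<le> ((H - eta *\<^sub>R ((\<chi> i. if z \<le> P$i then 1 else 0) - alpha)) + eta *\<^sub>R rkv)$j"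
    proof (cases "i = j")
      case True then show ?thesis by simp
    next
      case False
      then have "i < j" using ij by simp
      then have aij: "alpha$i < alpha$j" by (rule am)
      have y: "?Y$i \<le> ?Y$j" using Ym[OF ij] .
      consider "z \<le> P$i" "z \<le> P$j" | "P$i < z" "P$j < z" | "P$i < z" "z \<le> P$j" | "z \<le> P$i" "P$j < z"
        by linarith
      then show ?thesis
      proof cases
        case 1 then show ?thesis using y aij eta
          by (simp add: algebra_simps) (smt (verit) mult_strict_left_mono)
      next
        case 2 then show ?thesis using y aij eta
          by (simp add: algebra_simps) (smt (verit) mult_strict_left_mono)
      next
        case 3
        have g: "?Y$j - ?Y$i \<ge> eta" using gap[OF Y 3(1)[unfolded P_def] 3(2)[unfolded P_def]] by simp
        show ?thesis using 3 g aij eta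
          by (simp add: algebra_simps) (smt (verit) mult_strict_left_mono)
      next
        case 4 then show ?thesis using Pm[OF ij] by simp
      qed
    qed
  qed
qed


lemma coord_bound:
  fixes p z a d R :: real
  assumes "\<bar>z\<bar> \<le> R" "0 \<le> d" "d \<le> a" "d \<le> 1 - a"
  shows "p * ((if z \<le> p then 1 else 0) - a) \<ge> d * \<bar>p\<bar> - R"
proof (cases "z \<le> p")
  case True
  show ?thesis
  proof (cases "p \<ge> 0")
    case True
    have "0 \<le> R" using assms(1) by linarith
    have "d * p \<le> p * (1 - a)" using mult_left_mono[of d "1-a" p] True assms by (simp add: mult.commute)
    then show ?thesis using \<open>z \<le> p\<close> True \<open>0 \<le> R\<close> by simp
  next
    case False
    then have "-R \<le> p" using \<open>z \<le> p\<close> assms by linarith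
    have "p * (1 - a + d) \<ge> -R * (1 - a + d)" using \<open>-R \<le> p\<close> assms by (intro mult_right_mono) auto
    moreover have "R * (1 - a + d) \<le> R" using assms mult_left_mono[of "1 - a + d" 1 R] by auto
    ultimately show ?thesis using False \<open>z \<le> p\<close> by (simp add: algebra_simps)
  qed
next
  case False
  show ?thesis
  proof (cases "p \<le> 0")
    case True
    have "0 \<le> R" using assms(1) by linarith
    have "d * (-p) \<le> a * (-p)" using mult_right_mono[of d a "-p"] True assms by simp
    then show ?thesis using False True \<open>0 \<le> R\<close> by (simp add: algebra_simps)
  next
    case F2: False
    then have "p \<le> R" using False assms by linarith
    have "p * (a + d) \<le> R * (a + d)" using \<open>p \<le> R\<close> assms by (intro mult_right_mono) auto
    moreover have "R * (a + d) \<le> R" using assms mult_left_mono[of "a + d" 1 R] by auto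
    ultimately show ?thesis using False F2 by (simp add: algebra_simps)
  qed
qed

lemma inner_H_g:
  fixes H :: "(real,'m::{finite,linorder}) vec"
  defines "P \<equiv> closest_point monoK H"
  assumes am: "alpha \<in> monoK" and d: "d > 0" "\<And>i. d \<le> alpha$i \<and> d \<le> 1 - alpha$i" and z: "\<bar>z\<bar> \<le> R"
  shows "inner H ((\<chi> i. if z \<le> P$i then 1 else 0) - alpha) \<ge> d * norm P - real CARD('m) * R"
proof -
  let ?c = "(\<chi> i. if z \<le> P$i then 1 else 0) :: (real,'m) vec"
  have r1: "inner (H - P) ?c \<ge> 0" using inner_r_cov[of H z] by (simp add: P_def)
  have r2: "inner (H - P) alpha \<le> 0" using inner_r_alpha[OF am, of H] by (simp add: P_def)
  have "inner P (?c - alpha) = (\<Sum>i\<in>UNIV. P$i * ((if z \<le> P$i then 1 else 0) - alpha$i))"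
    by (simp add: inner_vec_def)
  also have "\<dots> \<ge> (\<Sum>i\<in>UNIV. d * \<bar>P$i\<bar> - R)"
    by (rule sum_mono) (use coord_bound[OF z] d in \<open>auto simp: less_imp_le\<close>)
  finally have "inner P (?c - alpha) \<ge> d * (\<Sum>i\<in>UNIV. \<bar>P$i\<bar>) - real CARD('m) * R"
    by (simp add: sum_subtractf sum_distrib_left)
  moreover have "d * norm P \<le> d * (\<Sum>i\<in>UNIV. \<bar>P$i\<bar>)"
    using norm_le_l1_cart[of P] d(1) by (intro mult_left_mono) auto
  moreover have "inner H (?c - alpha) = inner P (?c - alpha) + inner (H - P) ?c - inner (H - P) alpha"
    by (simp add: inner_diff_left inner_diff_right)
  ultimately show ?thesis using r1 r2 by linarith
qed

lemma sum_sq_bound: "(\<Sum>j<n. (real j)^2) \<le> real n ^ 3 / 3"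
proof (induction n)
  case (Suc n)
  then show ?case by (simp add: power2_eq_square power3_eq_cube algebra_simps)
qed simp

lemma powr32: "m > 0 \<Longrightarrow> (m::real) powr (3/2) = m * sqrt m"
proof -
  assume "m > 0"
  have "m powr (3/2) = m powr (1 + 1/2)" by simp
  also have "\<dots> = m powr 1 * m powr (1/2)" by (rule powr_add)
  also have "\<dots> = m * m powr (1/2)" using \<open>m > 0\<close> by simp
  finally show ?thesis using \<open>m > 0\<close> by (simp add: powr_half_sqrt)
qed

lemma norm_rkv: "norm (rkv :: (real,'m::{finite,linorder}) vec) \<le> real CARD('m) * sqrt (real CARD('m)) / sqrt 3"
proof -
  let ?f = "\<lambda>i::'m. card {k. k < i}"
  have inj: "inj ?f"
  proof (rule injI)
    fix i j :: 'm assume eq: "?f i = ?f j"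
    show "i = j"
    proof (rule ccontr)
      assume "i \<noteq> j"
      then consider "i < j" | "j < i" by (meson linorder_neqE)
      then show False
      proof cases
        case 1
        then have "{k. k < i} \<subset> {k. k < j}" by auto
        then have "?f i < ?f j" by (intro psubset_card_mono) auto
        then show False using eq by simp
      next
        case 2
        then have "{k. k < j} \<subset> {k. k < i}" by auto
        then have "?f j < ?f i" by (intro psubset_card_mono) auto
        then show False using eq by simp
      qed
    qed
  qed
  have sub: "range ?f \<subseteq> {..<CARD('m)}"
  proof
    fix x assume "x \<in> range ?f"
    then obtain i where "x = ?f i" by auto
    moreover have "{k. k < i} \<subset> UNIV" by auto
    then have "?f i < CARD('m)" by (intro psubset_card_mono) auto
    ultimately show "x \<in> {..<CARD('m)}" by simp
  qed
  have "card (range ?f) = CARD('m)" using inj by (simp add: card_image)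
  then have im: "range ?f = {..<CARD('m)}" using sub by (intro card_subset_eq) auto
  have "(\<Sum>i\<in>UNIV. ((rkv :: (real,'m) vec)$i)^2) = (\<Sum>i\<in>UNIV. (real (?f i))^2)"
    by (simp add: rkv_def)
  also have "\<dots> = (\<Sum>j\<in>range ?f. (real j)^2)"
    using sum.reindex[OF inj, of "\<lambda>j. (real j)^2"] by (simp add: comp_def)
  also have "\<dots> = (\<Sum>j<CARD('m). (real j)^2)" using im by simp
  also have "\<dots> \<le> real CARD('m) ^ 3 / 3" by (rule sum_sq_bound)
  finally have s: "(\<Sum>i\<in>UNIV. ((rkv :: (real,'m) vec)$i)^2) \<le> real CARD('m) ^ 3 / 3" .
  have "norm (rkv :: (real,'m) vec) = sqrt (\<Sum>i\<in>UNIV. ((rkv :: (real,'m) vec)$i)^2)" by (simp add: norm_vec_def L2_set_def)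
  also have "\<dots> \<le> sqrt (real CARD('m) ^ 3 / 3)" using s by simp
  also have "\<dots> = real CARD('m) * sqrt (real CARD('m)) / sqrt 3"
    by (simp add: real_sqrt_divide real_sqrt_mult power3_eq_cube)
  finally show ?thesis .
qed

lemma norm_g:
  fixes alpha P :: "(real,'m::{finite,linorder}) vec" and z :: real
  assumes "\<And>i. 0 < alpha $ i \<and> alpha $ i < 1"
  shows "norm ((\<chi> i. if z \<le> P$i then 1 else 0) - alpha) \<le> sqrt (real CARD('m))"
proof -
  have c: "norm (((\<chi> i. if z \<le> P$i then 1 else 0) - alpha)$i) \<le> norm (((\<chi> i. 1) :: (real,'m) vec)$i)" for i
  proof -
    have "0 < alpha $ i \<and> alpha $ i < 1" using assms by blast
    then show ?thesis by auto
  qed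
  have "norm ((\<chi> i. if z \<le> P$i then 1 else 0) - alpha) \<le> norm ((\<chi> i. 1) :: (real,'m) vec)"
    by (rule norm_le_componentwise_cart[OF c])
  also have "norm ((\<chi> i. 1) :: (real,'m) vec) = sqrt (real CARD('m))"
    by (simp add: norm_vec_def L2_set_def)
  finally show ?thesis .
qed

lemma dist_bound:
  fixes H :: "(real,'m::{finite,linorder}) vec"
  assumes "H + eta *\<^sub>R rkv \<in> monoK" "eta \<ge> 0"
  shows "norm (H - closest_point monoK H) \<le> eta * norm (rkv :: (real,'m) vec)"
proof -
  have "dist H (closest_point monoK H) \<le> dist H (H + eta *\<^sub>R rkv)"
    by (rule closest_point_le[OF closed_monoK assms(1)])
  then show ?thesis using assms(2) by (simp add: dist_norm)
qed


lemma norm_step: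
  fixes H alpha :: "(real,'m::{finite,linorder}) vec"
  defines "P \<equiv> closest_point monoK H"
  defines "m \<equiv> real CARD('m)"
  assumes Y: "H + eta *\<^sub>R rkv \<in> monoK" and eta: "eta > 0"
    and am: "alpha \<in> monoK" and ar: "\<And>i. 0 < alpha $ i \<and> alpha $ i < 1"
    and d: "d > 0" "\<And>i. d \<le> alpha$i \<and> d \<le> 1 - alpha$i" and z: "\<bar>z\<bar> \<le> R"
    and hB: "norm H \<le> B"
    and BD: "eta * m / (2 * d) + m * R / d + eta * norm (rkv :: (real,'m) vec) + eta * sqrt m \<le> B"
  shows "norm (H - eta *\<^sub>R ((\<chi> i. if z \<le> P$i then 1 else 0) - alpha)) \<le> B"
proof -
  define g where "g = ((\<chi> i. if z \<le> P$i then 1 else 0) - alpha)"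
  define D where "D = eta * m / (2 * d) + m * R / d + eta * norm (rkv :: (real,'m) vec)"
  have ng: "norm g \<le> sqrt m" unfolding g_def m_def by (rule norm_g[OF ar])
  have r: "norm (H - P) \<le> eta * norm (rkv :: (real,'m) vec)"
    unfolding P_def by (rule dist_bound[OF Y]) (use eta in simp)
  have ip: "inner H g \<ge> d * norm P - m * R"
    unfolding g_def P_def m_def by (rule inner_H_g[OF am d z])
  show ?thesis
  proof (cases "norm H \<ge> D")
    case True
    have "norm H \<le> norm P + norm (H - P)" using norm_triangle_ineq[of P "H - P"] by simp
    then have "norm P \<ge> eta * m / (2 * d) + m * R / d" using True r by (simp add: D_def)
    then have "d * norm P \<ge> d * (eta * m / (2 * d) + m * R / d)" using d(1) by (intro mult_left_mono) auto
    also have "d * (eta * m / (2 * d) + m * R / d) = eta * m / 2 + m * R"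
      using d(1) by (simp add: field_simps)
    finally have ipg: "inner H g \<ge> eta * m / 2" using ip by linarith
    have g2: "(norm g)^2 \<le> m"
    proof -
      have "(norm g)^2 \<le> (sqrt m)^2" using ng by (intro power_mono) auto
      then show ?thesis by (simp add: m_def)
    qed
    have "(norm (H - eta *\<^sub>R g))^2 = (norm H)^2 - 2 * eta * inner H g + eta^2 * (norm g)^2"
      unfolding power2_norm_eq_inner by (simp add: inner_diff_left inner_diff_right inner_commute algebra_simps power2_eq_square)
    also have "\<dots> \<le> (norm H)^2 - 2 * eta * (eta * m / 2) + eta^2 * m"
      using ipg g2 eta by (intro add_mono diff_mono mult_left_mono) auto
    also have "\<dots> = (norm H)^2" by (simp add: power2_eq_square)
    finally have "norm (H - eta *\<^sub>R g) \<le> norm H" by (rule power2_le_imp_le) simp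
    then show ?thesis using hB by (simp add: g_def)
  next
    case False
    have "norm (H - eta *\<^sub>R g) \<le> norm H + norm (eta *\<^sub>R g)" by (rule norm_triangle_ineq4)
    also have "\<dots> \<le> D + eta * sqrt m" using False ng eta by (auto intro!: add_mono mult_left_mono)
    finally show ?thesis using BD by (simp add: g_def D_def)
  qed
qed


theorem corollary1:
  fixes alpha :: "(real,'m::{finite,linorder}) vec"
    and eta R :: real and k y :: "nat \<Rightarrow> real" and b :: "nat \<Rightarrow> (real,'m) vec"
    and th1 :: "(real,'m) vec" and i :: 'm and T :: nat
  assumes alpha_mono: "\<And>i j. i < j \<Longrightarrow> alpha $ i < alpha $ j"
    and alpha_range: "\<And>i. 0 < alpha $ i \<and> alpha $ i < 1"
    and point: "\<And>t. t \<ge> 1 \<Longrightarrow> b t = (\<chi> j. k t)"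
    and bounded: "\<And>t. t \<ge> 1 \<Longrightarrow> \<bar>y t - k t\<bar> \<le> R"
    and eta: "eta > 0"
    and init: "th1 \<in> monoK"
    and T: "T \<ge> 1"
  shows "\<bar>(1 / real T) * (\<Sum>t = 1..T. mqt_cov alpha eta b y th1 t i) - alpha $ i\<bar>
     \<le> 2 * norm th1 / (eta * real T)
       + sqrt (real CARD('m)) / real T
       + real CARD('m) powr (3/2) / (2 * dA alpha * real T)
       + R * real CARD('m) powr (3/2) / (dA alpha * eta * real T)
       + real CARD('m) powr (3/2) / (real T * sqrt 3)"
proof -
  define m where "m = real CARD('m)"
  define H where "H t = mqt_hidden alpha eta b y th1 t" for t
  define P where "P t = closest_point monoK (H t)" for t
  define z where "z t = y t - k t" for t
  define c where "c t = ((\<chi> i. if z t \<le> P t $ i then 1 else 0) :: (real,'m) vec)" for t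
  define d where "d = dA alpha"
  have m1: "m \<ge> 1" unfolding m_def by simp
  have F1: "mqt_cov alpha eta b y th1 t i = c t $ i" if "t \<ge> 1" for t
    using point[OF that]
    by (simp add: mqt_cov_def mqt_forecast_def proj_def shift_const c_def z_def P_def H_def)
  have F2: "H (Suc t) = H t - eta *\<^sub>R (c t - alpha)" if t1: "t \<ge> 1" for t
  proof -
    obtain n where n: "t = Suc n" using t1 by (cases t) auto
    have e: "H (Suc t) = mqt_step alpha eta (b t) (y t) (H t)" by (simp add: n H_def)
    have q: "(b t + proj (shift_set monoK (b t)) (H t)) $ j = k t + P t $ j" for j
      by (simp add: point[OF t1] proj_def shift_const P_def)
    have cc: "(if y t \<le> k t + P t $ j then 1 else 0) = c t $ j" for j
      by (simp add: c_def z_def)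
    show ?thesis unfolding e mqt_step_def Let_def vec_eq_iff
      using q cc by simp
  qed
  have H1: "H 1 = th1" by (simp add: H_def)
  have H1': "H (Suc 0) = th1" by (simp add: H_def)
  have am: "alpha \<in> monoK"
    unfolding monoK_iff using alpha_mono by (metis order.order_iff_strict order.refl)
  have Rnn: "R \<ge> 0" using bounded[of 1] by simp
  have dfin: "d \<in> (\<lambda>i. min (alpha $ i) (1 - alpha $ i)) ` UNIV" unfolding d_def dA_def
    by (rule Min_in) auto
  have dpos: "d > 0" using dfin alpha_range by auto
  have dle: "d \<le> alpha$j \<and> d \<le> 1 - alpha$j" for j
  proof -
    have "d \<le> min (alpha $ j) (1 - alpha $ j)" unfolding d_def dA_def by (rule Min_le) auto
    then show ?thesis by simp
  qed
  define B where "B = max (norm th1) (eta * m / (2 * d) + m * R / d + eta * norm (rkv :: (real,'m) vec) + eta * sqrt m)"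
  have inv: "H t + eta *\<^sub>R rkv \<in> monoK \<and> norm (H t) \<le> B" if "t \<ge> 1" for t
    using that
  proof (induction t rule: dec_induct)
    case base
    have "th1 + eta *\<^sub>R rkv \<in> monoK" using init rkv_mono eta
      by (auto simp: monoK_iff intro!: add_mono mult_left_mono)
    then show ?case by (simp add: H1 H1' B_def)
  next
    case (step t)
    have Y: "H t + eta *\<^sub>R rkv \<in> monoK" and nb: "norm (H t) \<le> B" using step.IH by auto
    have "H (Suc t) + eta *\<^sub>R rkv \<in> monoK"
      unfolding F2[OF step.hyps(1)] c_def P_def using inv_step[OF Y[unfolded P_def] eta alpha_mono] by simp
    moreover have "norm (H (Suc t)) \<le> B"
      unfolding F2[OF step.hyps(1)] c_def P_def
      by (rule norm_step[OF Y eta am alpha_range dpos dle bounded[of t, folded z_def] nb])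
         (use step.hyps(1) in \<open>auto simp: B_def m_def\<close>)
    ultimately show ?case by simp
  qed
  have tel: "(\<Sum>t = 1..n. c t $ i) = real n * alpha $ i + (th1 $ i - H (Suc n) $ i) / eta" for n
  proof (induction n)
    case 0
    then show ?case by (simp add: H1')
  next
    case (Suc n)
    have "H (Suc (Suc n)) $ i = H (Suc n) $ i - eta * (c (Suc n) $ i - alpha $ i)"
      using F2[of "Suc n"] by simp
    then show ?case using Suc eta by (simp add: field_simps)
  qed
  have sumeq: "(\<Sum>t = 1..T. mqt_cov alpha eta b y th1 t i) = (\<Sum>t = 1..T. c t $ i)"
    by (rule sum.cong) (auto simp: F1)
  have Tpos: "real T > 0" using T by simp
  have "(1 / real T) * (\<Sum>t = 1..T. mqt_cov alpha eta b y th1 t i) - alpha $ i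
      = (th1 $ i - H (Suc T) $ i) / (eta * real T)"
    unfolding sumeq tel using Tpos eta by (simp add: field_simps)
  then have "\<bar>(1 / real T) * (\<Sum>t = 1..T. mqt_cov alpha eta b y th1 t i) - alpha $ i\<bar>
      = \<bar>th1 $ i - H (Suc T) $ i\<bar> / (eta * real T)"
    using Tpos eta by (simp add: abs_divide)
  also have "\<dots> \<le> (norm th1 + B) / (eta * real T)"
  proof (rule divide_right_mono)
    have "\<bar>th1 $ i\<bar> \<le> norm th1" by (rule component_le_norm_cart)
    moreover have "\<bar>H (Suc T) $ i\<bar> \<le> B"
      using component_le_norm_cart[of "H (Suc T)" i] inv[of "Suc T"] by simp
    ultimately show "\<bar>th1 $ i - H (Suc T) $ i\<bar> \<le> norm th1 + B" by linarith
  qed (use Tpos eta in simp)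
  also have "\<dots> \<le> (2 * norm th1 + (eta * m / (2 * d) + m * R / d + eta * norm (rkv :: (real,'m) vec) + eta * sqrt m)) / (eta * real T)"
  proof (rule divide_right_mono)
    have "0 \<le> eta * m / (2 * d) + m * R / d + eta * norm (rkv :: (real,'m) vec) + eta * sqrt m"
      using eta dpos Rnn m1 by (intro add_nonneg_nonneg divide_nonneg_nonneg mult_nonneg_nonneg) auto
    then show "norm th1 + B \<le> 2 * norm th1 + (eta * m / (2 * d) + m * R / d + eta * norm (rkv :: (real,'m) vec) + eta * sqrt m)"
      by (auto simp: B_def)
  qed (use Tpos eta in simp)
  also have "\<dots> \<le> 2 * norm th1 / (eta * real T)
       + sqrt m / real T
       + m powr (3/2) / (2 * d * real T)
       + R * m powr (3/2) / (d * eta * real T)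
       + m powr (3/2) / (real T * sqrt 3)"
  proof -
    have M: "m powr (3/2) = m * sqrt m" using m1 by (intro powr32) auto
    have mM: "m \<le> m * sqrt m" using m1 by simp
    have nr: "norm (rkv :: (real,'m) vec) \<le> m * sqrt m / sqrt 3" unfolding m_def by (rule norm_rkv)
    have e: "(2 * norm th1 + (eta * m / (2 * d) + m * R / d + eta * norm (rkv :: (real,'m) vec) + eta * sqrt m)) / (eta * real T)
      = 2 * norm th1 / (eta * real T) + sqrt m / real T + m / (2 * d * real T) + R * m / (d * eta * real T)
        + norm (rkv :: (real,'m) vec) / real T"
      using eta Tpos dpos by (simp add: field_simps)
    have 1: "m / (2 * d * real T) \<le> m * sqrt m / (2 * d * real T)"
      using mM dpos Tpos by (intro divide_right_mono) auto
    have 2: "R * m / (d * eta * real T) \<le> R * (m * sqrt m) / (d * eta * real T)"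
      using mM dpos Tpos eta Rnn by (intro divide_right_mono mult_left_mono) auto
    have 3: "norm (rkv :: (real,'m) vec) / real T \<le> m * sqrt m / (real T * sqrt 3)"
      using nr Tpos by (simp add: field_simps)
    show ?thesis unfolding e M using 1 2 3 by linarith
  qed
  finally show ?thesis by (simp add: m_def d_def)
qed

end
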